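(* Let $\mathcal{H}=\mathbb{C}^2$ and consider on $\mathcal{H}^{\otimes3}$ (factors $A,B,C$) the Hermitian operator $$w=a\mathbb{I}+bV_{(AB)}+cV_{(AC)}+dV_{(BC)}+\frac{if}{2}\big(V_{(ABC)}-V_{(CBA)}\big),\qquad a,b,c,d,f\in\mathbb{R}.$$ If $w$ is local-positive, then $w'=a\mathbb{I}+bV_{(AB)}+cV_{(AC)}+dV_{(BC)}$ is local-positive, and $w$ and $w'$ have the same bipartite reductions $\operatorname{Tr}_A$, $\operatorname{Tr}_B$, $\operatorname{Tr}_C$.
   Context: $V_{(XY)}$ denotes the operator swapping tensor factors $X$ and $Y$; $V_{(ABC)}$ denotes the operator permuting the three factors cyclically and $V_{(CBA)}=V_{(ABC)}^{\dagger}$ the inverse cyclic permutation. An operator $M$ on $\mathcal{H}^{\otimes3}$ is local-positive (with respect to the three factors) if $\langle\psi_1\psi_2\psi_3|M|\psi_1\psi_2\psi_3\rangle\ge0$ for all unit vectors $\psi_1,\psi_2,\psi_3\in\mathcal{H}$. *)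

theory Defs
  imports Complex_Main "HOL-Library.Complex_Order"
begin

text \<open>The qubit space H = C^2 has orthonormal basis indexed by bool.
  Operators on H (x) H (x) H (factors A,B,C) are given by their matrix elements
  M x y = <x|M|y> with x,y basis triples (A,B,C).\<close>

type_synonym idx3 = "bool \<times> bool \<times> bool"
type_synonym op3 = "idx3 \<Rightarrow> idx3 \<Rightarrow> complex"
type_synonym op2 = "bool \<times> bool \<Rightarrow> bool \<times> bool \<Rightarrow> complex"

definition Id3 :: op3 where
  "Id3 x y = (if x = y then 1 else 0)"

definition V_AB :: op3 where
  "V_AB = (\<lambda>(i,j,k) (i',j',k'). if i = j' \<and> j = i' \<and> k = k' then 1 else 0)"

definition V_AC :: op3 where
  "V_AC = (\<lambda>(i,j,k) (i',j',k'). if i = k' \<and> j = j' \<and> k = i' then 1 else 0)"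

definition V_BC :: op3 where
  "V_BC = (\<lambda>(i,j,k) (i',j',k'). if i = i' \<and> j = k' \<and> k = j' then 1 else 0)"

text \<open>Cyclic permutation V_(ABC) |x y z> = |z x y> (content of A moves to B, B to C, C to A)\<close>
definition V_ABC :: op3 where
  "V_ABC = (\<lambda>(i,j,k) (i',j',k'). if i = k' \<and> j = i' \<and> k = j' then 1 else 0)"

text \<open>Inverse cyclic permutation V_(CBA) = adjoint of V_(ABC): |x y z> = |y z x>\<close>
definition V_CBA :: op3 where
  "V_CBA = (\<lambda>(i,j,k) (i',j',k'). if i = j' \<and> j = k' \<and> k = i' then 1 else 0)"

definition unit_vec :: "(bool \<Rightarrow> complex) \<Rightarrow> bool" where
  "unit_vec \<psi> \<longleftrightarrow> (\<Sum>x\<in>UNIV. (cmod (\<psi> x))\<^sup>2) = 1"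

definition prod_state :: "(bool \<Rightarrow> complex) \<Rightarrow> (bool \<Rightarrow> complex) \<Rightarrow> (bool \<Rightarrow> complex) \<Rightarrow> idx3 \<Rightarrow> complex" where
  "prod_state \<psi>1 \<psi>2 \<psi>3 = (\<lambda>(i,j,k). \<psi>1 i * \<psi>2 j * \<psi>3 k)"

definition expect :: "op3 \<Rightarrow> (idx3 \<Rightarrow> complex) \<Rightarrow> complex" where
  "expect M \<phi> = (\<Sum>x\<in>UNIV. \<Sum>y\<in>UNIV. cnj (\<phi> x) * M x y * \<phi> y)"

text \<open>local positivity; 0 \<le> z on complex means z is real and nonnegative\<close>
definition local_positive :: "op3 \<Rightarrow> bool" where
  "local_positive M \<longleftrightarrow>
     (\<forall>\<psi>1 \<psi>2 \<psi>3. unit_vec \<psi>1 \<and> unit_vec \<psi>2 \<and> unit_vec \<psi>3 \<longrightarrow>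
        0 \<le> expect M (prod_state \<psi>1 \<psi>2 \<psi>3))"

definition ptrace_A :: "op3 \<Rightarrow> op2" where
  "ptrace_A M = (\<lambda>(j,k) (j',k'). \<Sum>i\<in>UNIV. M (i,j,k) (i,j',k'))"

definition ptrace_B :: "op3 \<Rightarrow> op2" where
  "ptrace_B M = (\<lambda>(i,k) (i',k'). \<Sum>j\<in>UNIV. M (i,j,k) (i',j,k'))"

definition ptrace_C :: "op3 \<Rightarrow> op2" where
  "ptrace_C M = (\<lambda>(i,j) (i',j'). \<Sum>k\<in>UNIV. M (i,j,k) (i',j',k))"

end

theory Submission
  imports Defs
begin

lemma expect_add: "expect M \<phi> + expect N \<phi> = expect (\<lambda>x y. M x y + N x y) \<phi>"
  unfolding expect_def by (simp add: sum.distrib[symmetric] algebra_simps)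

lemma expect_scale: "expect (\<lambda>x y. c * M x y) \<phi> = c * expect M \<phi>"
  unfolding expect_def by (simp add: sum_distrib_left algebra_simps)

lemma expect_cnj: "expect M (\<lambda>x. cnj (\<phi> x)) = expect (\<lambda>x y. M y x) \<phi>"
  unfolding expect_def
  by (subst sum.swap) (simp add: algebra_simps)

lemma prod_state_cnj:
  "prod_state (\<lambda>x. cnj (p1 x)) (\<lambda>x. cnj (p2 x)) (\<lambda>x. cnj (p3 x)) = (\<lambda>x. cnj (prod_state p1 p2 p3 x))"
  unfolding prod_state_def by auto

lemma unit_cnj: "unit_vec p \<Longrightarrow> unit_vec (\<lambda>x. cnj (p x))"
  unfolding unit_vec_def by simp

lemma tr_Id: "Id3 y x = Id3 x y" unfolding Id3_def by auto
lemma tr_AB: "V_AB y x = V_AB x y" unfolding V_AB_def by (cases x; cases y; auto)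
lemma tr_AC: "V_AC y x = V_AC x y" unfolding V_AC_def by (cases x; cases y; auto)
lemma tr_BC: "V_BC y x = V_BC x y" unfolding V_BC_def by (cases x; cases y; auto)
lemma tr_ABC: "V_ABC y x = V_CBA x y" unfolding V_ABC_def V_CBA_def by (cases x; cases y; auto)
lemma tr_CBA: "V_CBA y x = V_ABC x y" unfolding V_ABC_def V_CBA_def by (cases x; cases y; auto)

theorem mainTheorem11:
  fixes a b c d f :: real
  defines "w \<equiv> (\<lambda>x y. of_real a * Id3 x y + of_real b * V_AB x y + of_real c * V_AC x y
                 + of_real d * V_BC x y + (\<i> * of_real f / 2) * (V_ABC x y - V_CBA x y))"
      and "w' \<equiv> (\<lambda>x y. of_real a * Id3 x y + of_real b * V_AB x y + of_real c * V_AC x y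
                 + of_real d * V_BC x y)"
  assumes "local_positive w"
  shows "local_positive w' \<and> ptrace_A w = ptrace_A w' \<and> ptrace_B w = ptrace_B w'
         \<and> ptrace_C w = ptrace_C w'"
proof (intro conjI)
  show "local_positive w'"
    unfolding local_positive_def
  proof (intro allI impI)
    fix p1 p2 p3 :: "bool \<Rightarrow> complex"
    assume u: "unit_vec p1 \<and> unit_vec p2 \<and> unit_vec p3"
    let ?phi = "prod_state p1 p2 p3"
    have h1: "0 \<le> expect w ?phi" using assms(3) u unfolding local_positive_def by blast
    have h2: "0 \<le> expect w (prod_state (\<lambda>x. cnj (p1 x)) (\<lambda>x. cnj (p2 x)) (\<lambda>x. cnj (p3 x)))"
      using assms(3) u unit_cnj unfolding local_positive_def by blast
    have e2: "expect w (prod_state (\<lambda>x. cnj (p1 x)) (\<lambda>x. cnj (p2 x)) (\<lambda>x. cnj (p3 x)))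
        = expect (\<lambda>x y. w y x) ?phi"
      by (simp add: prod_state_cnj expect_cnj)
    have pw: "(\<lambda>x y. w x y + w y x) = (\<lambda>x y. 2 * w' x y)"
      proof (intro ext)
      fix x y
      show "w x y + w y x = 2 * w' x y"
        unfolding w_def w'_def
        by (simp only: tr_Id[of y x] tr_AB[of y x] tr_AC[of y x] tr_BC[of y x] tr_ABC[of y x] tr_CBA[of y x])
           (simp add: algebra_simps add_divide_distrib[symmetric])
    qed
    have "expect w ?phi + expect (\<lambda>x y. w y x) ?phi = 2 * expect w' ?phi"
      by (simp add: expect_add pw expect_scale)
    hence "expect w' ?phi = (expect w ?phi + expect (\<lambda>x y. w y x) ?phi) / 2" by simp
    moreover have "0 \<le> (expect w ?phi + expect (\<lambda>x y. w y x) ?phi) / 2"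
      using h1 h2 e2 by (simp add: less_eq_complex_def)
    ultimately show "0 \<le> expect w' ?phi" by (simp only:)
  qed
  show "ptrace_A w = ptrace_A w'"
    unfolding ptrace_A_def w_def w'_def
    by (intro ext) (clarsimp simp: UNIV_bool V_ABC_def V_CBA_def; blast?)
  show "ptrace_B w = ptrace_B w'"
    unfolding ptrace_B_def w_def w'_def
    by (intro ext) (clarsimp simp: UNIV_bool V_ABC_def V_CBA_def; blast?)
  show "ptrace_C w = ptrace_C w'"
    unfolding ptrace_C_def w_def w'_def
    by (intro ext) (clarsimp simp: UNIV_bool V_ABC_def V_CBA_def; blast?)
qed

end
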